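(* Let $n\ge2$, $I\subset\mathbb{R}$ a compact interval, $\gamma\colon I\to\mathbb{R}^n$ a smooth curve with $|\det(\gamma'(s),\dots,\gamma^{(n)}(s))|\ge c_0>0$ on $I$, and $\chi\in C^\infty(\mathbb{R})$ non-negative, not identically zero, supported in the interior of $I$. Let $M_\gamma f(x):=\sup_{t>0}|\int f(x-t\gamma(s))\chi(s)\,\mathrm{d}s|$. Then $\|M_\gamma\|_{L^p(\mathbb{R}^n)\to L^p(\mathbb{R}^n)}=\infty$ for every $1\le p\le n$. *)

theory Defs
  imports "HOL-Analysis.Analysis"
begin

definition curve_deriv :: "nat \<Rightarrow> (real \<Rightarrow> real^'n) \<Rightarrow> real \<Rightarrow> real^'n" where
  "curve_deriv k \<gamma> s = (\<chi> i. (deriv ^^ k) (\<lambda>t. \<gamma> t $ i) s)"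

text \<open>A fixed enumeration of the coordinate index type by 1..n
  (the absolute value of the determinant below does not depend on this choice).\<close>
definition col_order :: "'n::finite \<Rightarrow> nat" where
  "col_order = (SOME e. bij_betw e (UNIV::'n set) {1..CARD('n)})"

definition torsion_det :: "(real \<Rightarrow> real^'n::finite) \<Rightarrow> real \<Rightarrow> real" where
  "torsion_det \<gamma> s = det (\<chi> i j. curve_deriv (col_order j) \<gamma> s $ i)"

definition curve_maximal ::
  "(real \<Rightarrow> real^'n) \<Rightarrow> (real \<Rightarrow> real) \<Rightarrow> (real^'n \<Rightarrow> real) \<Rightarrow> real^'n \<Rightarrow> ennreal" where
  "curve_maximal \<gamma> \<chi>' f x =
     (SUP t\<in>{0<..}. ennreal \<bar>LINT s|lborel. f (x - t *\<^sub>R \<gamma> s) * \<chi>' s\<bar>)"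

definition enn_powr :: "ennreal \<Rightarrow> real \<Rightarrow> ennreal" where
  "enn_powr x p = (if x = \<infinity> then \<infinity> else ennreal (enn2real x powr p))"

end

theory Submission
  imports Defs
begin
lemma col_order_bij: "bij_betw (col_order :: 'n::finite \<Rightarrow> nat) UNIV {1..CARD('n)}"
proof -
  have "\<exists>e. bij_betw (e::'n \<Rightarrow> nat) UNIV {1..CARD('n)}"
    by (rule finite_same_card_bij) auto
  then show ?thesis unfolding col_order_def by (rule someI_ex)
qed

lemma differentiable_prod_real:
  fixes f :: "'i \<Rightarrow> real \<Rightarrow> real"
  assumes "\<And>i. i \<in> I \<Longrightarrow> f i differentiable (at x)"
  shows "(\<lambda>x. \<Prod>i\<in>I. f i x) differentiable (at x)"
proof -
  from assms have "\<forall>i\<in>I. \<exists>D. (f i has_derivative D) (at x)" by (auto simp: differentiable_def)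
  then obtain D where "\<And>i. i \<in> I \<Longrightarrow> (f i has_derivative D i) (at x)" by metis
  then show ?thesis unfolding differentiable_def by (blast intro: has_derivative_prod)
qed

lemma differentiable_det:
  fixes M :: "real \<Rightarrow> real^'n^'n"
  assumes "\<And>i j. (\<lambda>s. M s $ i $ j) differentiable (at x)"
  shows "(\<lambda>s. det (M s)) differentiable (at x)"
  unfolding det_def
  by (intro differentiable_sum ballI differentiable_mult differentiable_const differentiable_prod_real assms) auto

lemma curve_deriv_0: "curve_deriv 0 \<gamma> s = \<gamma> s"
  by (simp add: curve_deriv_def vec_eq_iff)

lemma curve_deriv_has_deriv:
  assumes "\<forall>k i. \<forall>x\<in>U. ((deriv ^^ k) (\<lambda>t. \<gamma> t $ i)) differentiable (at x)" "s \<in> U"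
  shows "((\<lambda>t. curve_deriv k \<gamma> t $ i) has_real_derivative curve_deriv (Suc k) \<gamma> s $ i) (at s)"
proof -
  have "(deriv ^^ k) (\<lambda>t. \<gamma> t $ i) differentiable (at s)" using assms by blast
  then have "((deriv ^^ k) (\<lambda>t. \<gamma> t $ i) has_real_derivative deriv ((deriv ^^ k) (\<lambda>t. \<gamma> t $ i)) s) (at s)"
    using DERIV_deriv_iff_real_differentiable by blast
  then show ?thesis by (simp add: curve_deriv_def)
qed

lemma inv_mat_ex:
  fixes G :: "real^'n^'n"
  assumes "det G \<noteq> 0"
  obtains B where "B ** G = mat 1" "G ** B = mat 1"
  using assms unfolding invertible_det_nz[symmetric] invertible_def by blast

lemma indep_cols:
  fixes G :: "real^'n^'n" and V :: "nat \<Rightarrow> real^'n"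
  assumes ord: "bij_betw ord (UNIV::'n set) {1..CARD('n)}"
    and G: "G = (\<chi> i j. V (ord j) $ i)"
    and det: "det G \<noteq> 0"
    and sum0: "\<forall>i. (\<Sum>k\<in>{1..CARD('n)}. d k * V k $ i) = 0"
    and k: "k \<in> {1..CARD('n)}"
  shows "d k = 0"
proof -
  define c where "c = (\<chi> j. d (ord j))"
  have "G *v c = 0"
  proof -
    have "(G *v c) $ i = 0" for i
    proof -
      have "(G *v c) $ i = (\<Sum>j\<in>UNIV. d (ord j) * V (ord j) $ i)"
        by (simp add: matrix_vector_mult_def G c_def mult.commute)
      also have "\<dots> = (\<Sum>k\<in>{1..CARD('n)}. d k * V k $ i)"
        using sum.reindex_bij_betw[OF ord, of "\<lambda>k. d k * V k $ i"] by simp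
      finally show ?thesis using sum0 by simp
    qed
    then show ?thesis by (simp add: vec_eq_iff)
  qed
  obtain B where B: "B ** G = mat 1" using inv_mat_ex[OF det] by blast
  have "c = B *v (G *v c)" by (simp add: matrix_vector_mul_assoc B)
  then have c0: "c = 0" using \<open>G *v c = 0\<close> by simp
  obtain j where "ord j = k" using ord k unfolding bij_betw_def by (metis imageE)
  then show ?thesis using c0 by (auto simp: c_def vec_eq_iff)
qed

lemma deriv_zero_on_open:
  fixes f :: "real \<Rightarrow> real"
  assumes "open J" "s \<in> J" "\<forall>t\<in>J. f t = 0"
  shows "deriv f s = 0"
proof -
  have "((\<lambda>_. 0::real) has_real_derivative 0) (at s)" by simp
  then have "(f has_real_derivative 0) (at s)"
    by (rule has_field_derivative_transform_within_open[OF _ assms(1,2)]) (use assms(3) in auto)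
  then show ?thesis by (rule DERIV_imp_deriv)
qed

lemma shift_sum_lemma:
  fixes h :: "nat \<Rightarrow> real"
  shows "(\<Sum>k\<in>{1..Suc m}. (if 2 \<le> k then h (k-1) else 0) * X k) = (\<Sum>k\<in>{1..m}. h k * X (Suc k))"
  by (induction m) auto

lemma key_nondeg:
  fixes \<gamma> :: "real \<Rightarrow> real^'n"
  assumes ord: "bij_betw ord (UNIV::'n set) {1..CARD('n)}"
    and k0: "ord k0 = CARD('n)"
    and J: "open J" "J \<noteq> {}" "J \<subseteq> U"
    and sm: "\<forall>k i. \<forall>x\<in>U. ((deriv ^^ k) (\<lambda>t. \<gamma> t $ i)) differentiable (at x)"
    and det: "\<forall>s\<in>J. det (\<chi> i j. curve_deriv (ord j) \<gamma> s $ i) \<noteq> 0"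
  shows "\<exists>s\<in>J. \<forall>c. (\<chi> i j. curve_deriv (ord j) \<gamma> s $ i) *v c = \<gamma> s \<longrightarrow> c $ k0 \<noteq> 0"
proof (rule ccontr)
  assume H: "\<not> ?thesis"
  let ?n = "CARD('n)"
  have npos: "?n \<ge> 1" using zero_less_card_finite[where 'a='n] by linarith
  define D where "D k s = curve_deriv k \<gamma> s" for k s
  define G where "G s = (\<chi> i j. D (ord j) s $ i)" for s
  define a where "a s = (\<chi> k. det(\<chi> i j. if j=k then \<gamma> s$i else G s$i$j) / det (G s))" for s
  define idx where "idx = inv_into UNIV ord"
  define \<beta> where "\<beta> k s = a s $ idx k" for k s
  have inj: "inj ord" using ord bij_betw_def by blast
  have idx_ord: "idx (ord j) = j" for j using inj by (simp add: idx_def)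
  have ord_idx: "ord (idx k) = k" if "k \<in> {1..?n}" for k
    using ord that unfolding idx_def bij_betw_def by (simp add: f_inv_into_f)
  have idxn: "idx ?n = k0" using idx_ord[of k0] k0 by simp
  have detG: "det (G s) \<noteq> 0" if "s \<in> J" for s using det that by (simp add: G_def D_def)
  have Gs: "G s *v a s = \<gamma> s" if "s \<in> J" for s
    using cramer[OF detG[OF that]] by (simp add: a_def)
  have ak0: "a s $ k0 = 0" if "s \<in> J" for s
  proof -
    from H that obtain c where c: "G s *v c = \<gamma> s" "c $ k0 = 0"
      by (auto simp: G_def D_def)
    have "c = a s" using c(1) cramer[OF detG[OF that]] by (simp add: a_def)
    then show ?thesis using c(2) by simp
  qed
  have rep: "\<gamma> s $ i = (\<Sum>k\<in>{1..?n}. \<beta> k s * D k s $ i)" if "s \<in> J" for s i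
  proof -
    have "\<gamma> s $ i = (G s *v a s) $ i" using Gs[OF that] by simp
    also have "\<dots> = (\<Sum>j\<in>UNIV. \<beta> (ord j) s * D (ord j) s $ i)"
      by (simp add: matrix_vector_mult_def G_def \<beta>_def idx_ord mult.commute)
    also have "\<dots> = (\<Sum>k\<in>{1..?n}. \<beta> k s * D k s $ i)"
      using sum.reindex_bij_betw[OF ord, of "\<lambda>k. \<beta> k s * D k s $ i"] by simp
    finally show ?thesis .
  qed
  have \<beta>n: "\<beta> ?n s = 0" if "s \<in> J" for s using ak0[OF that] by (simp add: \<beta>_def idxn)
  have sm': "(\<lambda>t. D k t $ i) differentiable (at s)" if "s \<in> U" for k i s
    using sm that by (simp add: D_def curve_deriv_def)
  have smg: "(\<lambda>t. \<gamma> t $ i) differentiable (at s)" if "s \<in> U" for i s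
    using sm'[OF that, of 0 i] by (simp add: D_def curve_deriv_0)
  have diff\<beta>: "\<beta> k differentiable (at s)" if "s \<in> J" for k s
  proof -
    have sU: "s \<in> U" using that J by blast
    have eq: "\<beta> k = (\<lambda>s. det (\<chi> i j. if j = idx k then \<gamma> s$i else G s$i$j) / det (G s))"
      by (simp add: fun_eq_iff \<beta>_def a_def)
    show ?thesis unfolding eq
    proof (intro differentiable_divide differentiable_det)
      fix i j
      show "(\<lambda>s. (\<chi> i j. if j = idx k then \<gamma> s $ i else G s $ i $ j) $ i $ j) differentiable at s"
        using smg[OF sU] sm'[OF sU] by (cases "j = idx k") (simp_all add: G_def)
    next
      fix i j
      show "(\<lambda>s. G s $ i $ j) differentiable at s" using sm'[OF sU] by (simp add: G_def)
    next
      show "det (G s) \<noteq> 0" by (rule detG[OF that])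
    qed
  qed
  have Dder: "((\<lambda>t. D k t $ i) has_real_derivative D (Suc k) s $ i) (at s)" if "s \<in> U" for k i s
    unfolding D_def by (rule curve_deriv_has_deriv[OF sm that])
  have deriv_id: "D 1 s $ i = (\<Sum>k\<in>{1..?n}. deriv (\<beta> k) s * D k s $ i + \<beta> k s * D (Suc k) s $ i)"
    if "s \<in> J" for s i
  proof -
    have sU: "s \<in> U" using that J by blast
    have h: "((\<lambda>t. \<Sum>k\<in>{1..?n}. \<beta> k t * D k t $ i) has_real_derivative
        (\<Sum>k\<in>{1..?n}. deriv (\<beta> k) s * D k s $ i + D (Suc k) s $ i * \<beta> k s)) (at s)"
      by (intro DERIV_sum DERIV_mult Dder[OF sU]) (use diff\<beta>[OF that] DERIV_deriv_iff_real_differentiable in blast)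
    have h2: "((\<lambda>t. \<gamma> t $ i) has_real_derivative
        (\<Sum>k\<in>{1..?n}. deriv (\<beta> k) s * D k s $ i + D (Suc k) s $ i * \<beta> k s)) (at s)"
      by (rule has_field_derivative_transform_within_open[OF h J(1) that]) (simp add: rep)
    have h3: "((\<lambda>t. \<gamma> t $ i) has_real_derivative D 1 s $ i) (at s)"
      using Dder[OF sU, of 0 i] by (simp add: D_def curve_deriv_0)
    show ?thesis using DERIV_unique[OF h3 h2] by (simp add: mult.commute)
  qed
  have coef: "deriv (\<beta> k) s + (if 2 \<le> k then \<beta> (k-1) s else 0) = (if k = 1 then 1 else 0)"
    if "s \<in> J" "k \<in> {1..?n}" for s k
  proof -
    define d where "d k = deriv (\<beta> k) s + (if 2 \<le> k then \<beta> (k-1) s else 0) - (if k = 1 then 1 else 0)" for k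
    obtain m where m: "?n = Suc m" using npos by (cases ?n) auto
    have "\<forall>i. (\<Sum>k\<in>{1..?n}. d k * D k s $ i) = 0"
    proof
      fix i
      have s1: "(\<Sum>k\<in>{1..?n}. (if k = 1 then 1 else 0) * D k s $ i) = D 1 s $ i"
      proof -
        have "(\<Sum>k\<in>{1..?n}. (if k = 1 then 1 else 0) * D k s $ i) = (\<Sum>k\<in>{1..?n}. if k = 1 then D k s $ i else 0)"
          by (rule sum.cong) auto
        also have "\<dots> = D 1 s $ i" using npos by (simp add: sum.delta)
        finally show ?thesis .
      qed
      have s2: "(\<Sum>k\<in>{1..?n}. (if 2 \<le> k then \<beta> (k-1) s else 0) * D k s $ i)
          = (\<Sum>k\<in>{1..?n}. \<beta> k s * D (Suc k) s $ i)"
      proof -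
        have "(\<Sum>k\<in>{1..Suc m}. (if 2 \<le> k then \<beta> (k-1) s else 0) * D k s $ i) = (\<Sum>k\<in>{1..m}. \<beta> k s * D (Suc k) s $ i)"
          by (rule shift_sum_lemma)
        moreover have "(\<Sum>k\<in>{1..Suc m}. \<beta> k s * D (Suc k) s $ i) = (\<Sum>k\<in>{1..m}. \<beta> k s * D (Suc k) s $ i) + \<beta> (Suc m) s * D (Suc (Suc m)) s $ i"
          by (simp add: sum.cl_ivl_Suc)
        moreover have "\<beta> (Suc m) s = 0" using \<beta>n[OF that(1)] m by simp
        ultimately show ?thesis unfolding m by simp
      qed
      have "(\<Sum>k\<in>{1..?n}. d k * D k s $ i) = (\<Sum>k\<in>{1..?n}. deriv (\<beta> k) s * D k s $ i)
         + (\<Sum>k\<in>{1..?n}. (if 2 \<le> k then \<beta> (k-1) s else 0) * D k s $ i)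
         - (\<Sum>k\<in>{1..?n}. (if k = 1 then 1 else 0) * D k s $ i)"
        by (simp add: d_def algebra_simps sum.distrib sum_subtractf)
      also have "\<dots> = 0" using deriv_id[OF that(1), of i] s1 s2 by (simp add: sum.distrib)
      finally show "(\<Sum>k\<in>{1..?n}. d k * D k s $ i) = 0" .
    qed
    then have "d k = 0"
      by (intro indep_cols[OF ord _ detG[OF that(1)], of "\<lambda>k. D k s"]) (use that(2) in \<open>auto simp: G_def\<close>)
    then show ?thesis by (simp add: d_def)
  qed
  have down: "\<forall>s\<in>J. \<beta> (?n - m) s = 0" if "m < ?n" for m
    using that
  proof (induction m)
    case 0 then show ?case using \<beta>n by simp
  next
    case (Suc m)
    show ?case
    proof
      fix s assume s: "s \<in> J"
      have IH: "\<forall>t\<in>J. \<beta> (?n - m) t = 0" using Suc by simp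
      have "deriv (\<beta> (?n - m)) s = 0" by (rule deriv_zero_on_open[OF J(1) s IH])
      moreover have "2 \<le> ?n - m" "?n - m \<in> {1..?n}" "?n - m \<noteq> 1" using Suc.prems by auto
      ultimately have "\<beta> (?n - m - 1) s = 0" using coef[OF s, of "?n - m"] by simp
      moreover have "?n - m - 1 = ?n - Suc m" by simp
      ultimately show "\<beta> (?n - Suc m) s = 0" by simp
    qed
  qed
  obtain s where s: "s \<in> J" using J(2) by blast
  have "\<forall>t\<in>J. \<beta> 1 t = 0" using down[of "?n - 1"] npos by simp
  then have "deriv (\<beta> 1) s = 0" by (rule deriv_zero_on_open[OF J(1) s])
  with coef[OF s, of 1] npos show False by simp
qed

lemma taylor_bound:
  fixes g :: "real \<Rightarrow> real"
  assumes sm: "\<forall>k. \<forall>x\<in>U. (deriv ^^ k) g differentiable (at x)"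
    and sub: "cball s0 r \<subseteq> U" and n: "0 < n"
  shows "\<exists>K\<ge>0. \<forall>s\<in>cball s0 r. \<bar>g s - (\<Sum>m<n. (deriv ^^ m) g s0 / fact m * (s - s0)^m)\<bar> \<le> K * \<bar>s - s0\<bar>^n"
proof -
  have "continuous_on (cball s0 r) ((deriv ^^ n) g)"
    using sm sub by (intro continuous_at_imp_continuous_on ballI differentiable_imp_continuous_within) auto
  then have "compact ((deriv ^^ n) g ` cball s0 r)" by (intro compact_continuous_image) auto
  then obtain K0 where K0: "\<And>t. t \<in> cball s0 r \<Longrightarrow> \<bar>(deriv ^^ n) g t\<bar> \<le> K0"
    by (metis compact_imp_bounded bounded_iff imageI real_norm_def)
  define K where "K = max K0 0 / fact n"
  have "\<forall>s\<in>cball s0 r. \<bar>g s - (\<Sum>m<n. (deriv ^^ m) g s0 / fact m * (s - s0)^m)\<bar> \<le> K * \<bar>s - s0\<bar>^n"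
  proof
    fix s assume s: "s \<in> cball s0 r"
    show "\<bar>g s - (\<Sum>m<n. (deriv ^^ m) g s0 / fact m * (s - s0)^m)\<bar> \<le> K * \<bar>s - s0\<bar>^n"
    proof (cases "s = s0")
      case True
      obtain n' where n': "n = Suc n'" using n by (cases n) auto
      show ?thesis unfolding n' True by (simp add: sum.lessThan_Suc_shift)
    next
      case False
      have sr: "\<bar>s - s0\<bar> \<le> r" using s by (simp add: dist_real_def abs_minus_commute)
      have "\<exists>t. (if s < s0 then s < t \<and> t < s0 else s0 < t \<and> t < s) \<and>
        g s = (\<Sum>m<n. ((deriv ^^ m) g s0 / fact m) * (s - s0)^m) + ((deriv ^^ n) g t / fact n) * (s - s0)^n"
      proof (rule Taylor[of n "\<lambda>m. (deriv ^^ m) g" g "s0 - r" "s0 + r" s0 s])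
        show "\<forall>m t. m < n \<and> s0 - r \<le> t \<and> t \<le> s0 + r \<longrightarrow> DERIV ((deriv ^^ m) g) t :> (deriv ^^ Suc m) g t"
        proof (intro allI impI)
          fix m t assume "m < n \<and> s0 - r \<le> t \<and> t \<le> s0 + r"
          then have "t \<in> U" using sub by (auto simp: dist_real_def)
          then show "DERIV ((deriv ^^ m) g) t :> (deriv ^^ Suc m) g t"
            using sm DERIV_deriv_iff_real_differentiable by auto
        qed
      qed (use n sr False in auto)
      then obtain t where t: "(if s < s0 then s < t \<and> t < s0 else s0 < t \<and> t < s)"
        and eq: "g s = (\<Sum>m<n. ((deriv ^^ m) g s0 / fact m) * (s - s0)^m) + ((deriv ^^ n) g t / fact n) * (s - s0)^n"
        by blast
      have "t \<in> cball s0 r" using t sr by (auto simp: dist_real_def split: if_splits)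
      then have "\<bar>(deriv ^^ n) g t\<bar> \<le> max K0 0" using K0 by force
      then have "\<bar>(deriv ^^ n) g t / fact n * (s - s0)^n\<bar> \<le> max K0 0 / fact n * \<bar>s - s0\<bar>^n"
        by (simp add: abs_mult power_abs divide_right_mono mult_right_mono)
      then show ?thesis using eq by (simp add: K_def)
    qed
  qed
  moreover have "K \<ge> 0" by (simp add: K_def)
  ultimately show ?thesis by blast
qed

lemma mv_comp_cont: "continuous_on S (\<lambda>y::real^'n. (B *v y) $ i)"
  unfolding matrix_vector_mult_def by (simp add: continuous_intros)

lemma mv_comp_meas[measurable]: "(\<lambda>y::real^'n. (B *v y) $ i) \<in> borel_measurable borel"
  by (rule borel_measurable_continuous_onI[OF mv_comp_cont])

definition slab :: "real^'n^'n \<Rightarrow> 'n \<Rightarrow> real \<Rightarrow> real \<Rightarrow> real \<Rightarrow> (real^'n) set" where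
  "slab B k0 R c w = {y. (\<forall>i. i \<noteq> k0 \<longrightarrow> \<bar>(B *v y)$i\<bar> \<le> R) \<and> c \<le> (B *v y)$k0 \<and> (B *v y)$k0 < c + w}"

lemma slab_borel[measurable]: "slab B k0 R c w \<in> sets borel"
  unfolding slab_def by measurable

lemma slab_translate:
  assumes v: "B *v v = axis k0 1"
  shows "emeasure lborel (slab B k0 R c w) = emeasure lborel (slab B k0 R 0 w)"
proof -
  have eq: "(+) (- (c *\<^sub>R v)) -` slab B k0 R 0 w \<inter> space lborel = slab B k0 R c w"
  proof -
    have "B *v (- (c *\<^sub>R v) + y) = B *v y - c *\<^sub>R axis k0 1" for y
    proof -
      have "- (c *\<^sub>R v) + y = y - c *\<^sub>R v" by simp
      then show ?thesis by (simp add: matrix_vector_mult_diff_distrib v[symmetric] matrix_vector_mult_scaleR)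
    qed
    then show ?thesis by (auto simp: slab_def axis_def)
  qed
  have "emeasure lborel (slab B k0 R 0 w) = emeasure (distr lborel borel ((+) (- (c *\<^sub>R v)))) (slab B k0 R 0 w)"
    by (simp add: lborel_distr_plus)
  also have "\<dots> = emeasure lborel ((+) (- (c *\<^sub>R v)) -` slab B k0 R 0 w \<inter> space lborel)"
    by (rule emeasure_distr) auto
  finally show ?thesis using eq by simp
qed

lemma slab_pack:
  assumes v: "B *v v = axis k0 1" and M: "M > 0"
  shows "of_nat M * emeasure lborel (slab B k0 R 0 (1/M)) \<le> emeasure lborel (slab B k0 R 0 1)"
proof -
  define F where "F q = slab B k0 R (real q / M) (1/M)" for q
  have U: "(\<Sum>q<M. emeasure lborel (F q)) = emeasure lborel (\<Union>q<M. F q)"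
  proof (rule sum_emeasure)
    show "F ` {..<M} \<subseteq> sets lborel" by (auto simp: F_def)
    show "disjoint_family_on F {..<M}"
    proof (unfold disjoint_family_on_def, intro ballI impI)
      fix q q' assume qq: "q \<in> {..<M}" "q' \<in> {..<M}" "q \<noteq> q'"
      show "F q \<inter> F q' = {}"
      proof (rule ccontr)
        assume "F q \<inter> F q' \<noteq> {}"
        then obtain y where y: "y \<in> F q" "y \<in> F q'" by blast
        let ?z = "(B *v y) $ k0"
        have a: "real q / M \<le> ?z" "?z < real q / M + 1 / M" "real q' / M \<le> ?z" "?z < real q' / M + 1 / M"
          using y by (auto simp: F_def slab_def)
        have Mp: "real M > 0" using M by simp
        have "real q < real q' + 1" "real q' < real q + 1"
          using a Mp by (simp_all add: field_simps)
        then show False using qq(3) by linarith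
      qed
    qed
  qed auto
  have E: "emeasure lborel (F q) = emeasure lborel (slab B k0 R 0 (1/M))" for q
    unfolding F_def by (rule slab_translate[OF v])
  have S: "(\<Union>q<M. F q) \<subseteq> slab B k0 R 0 1"
  proof
    fix y assume "y \<in> (\<Union>q<M. F q)"
    then obtain q where q: "q < M" "y \<in> F q" by auto
    have Mp: "real M > 0" using M by simp
    have h1: "real q / M + 1 / M \<le> 1" using q(1) Mp by (simp add: field_simps)
    have z0: "0 \<le> real q / M" by simp
    have z1: "real q / M \<le> (B *v y) $ k0" and z2: "(B *v y) $ k0 < real q / M + 1 / M"
      and z3: "\<forall>i. i \<noteq> k0 \<longrightarrow> \<bar>(B *v y) $ i\<bar> \<le> R"
      using q(2) unfolding F_def slab_def by auto
    have "0 \<le> (B *v y) $ k0" "(B *v y) $ k0 < 0 + 1" using z0 z1 z2 h1 by linarith+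
    then show "y \<in> slab B k0 R 0 1" using z3 unfolding slab_def by blast
  qed
  have "of_nat M * emeasure lborel (slab B k0 R 0 (1/M)) = (\<Sum>q<M. emeasure lborel (F q))"
    using E by simp
  also have "\<dots> = emeasure lborel (\<Union>q<M. F q)" by (rule U)
  also have "\<dots> \<le> emeasure lborel (slab B k0 R 0 1)" by (rule emeasure_mono[OF S]) simp
  finally show ?thesis .
qed

lemma slab_bounded:
  fixes B G :: "real^'n^'n"
  assumes "G ** B = mat 1"
  shows "bounded (slab B k0 R c w)"
proof -
  define Rm where "Rm = max R (max \<bar>c\<bar> \<bar>c + w\<bar>)"
  have "slab B k0 R c w \<subseteq> (\<lambda>z. G *v z) ` cbox (- (\<chi> i. Rm)) (\<chi> i. Rm)"
  proof
    fix y assume y: "y \<in> slab B k0 R c w"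
    have "y = G *v (B *v y)" by (simp add: matrix_vector_mul_assoc assms)
    moreover have "B *v y \<in> cbox (- (\<chi> i. Rm)) (\<chi> i. Rm)"
      using y unfolding slab_def mem_box_cart Rm_def
      by (smt (verit, del_insts) mem_Collect_eq vector_uminus_component vec_lambda_beta)
    ultimately show "y \<in> (\<lambda>z. G *v z) ` cbox (- (\<chi> i. Rm)) (\<chi> i. Rm)" by blast
  qed
  moreover have "bounded ((\<lambda>z. G *v z) ` cbox (- (\<chi> i. Rm)) (\<chi> i. Rm))"
    by (intro bounded_linear_image bounded_cbox) (simp add: matrix_vector_mul_bounded_linear)
  ultimately show ?thesis using bounded_subset by blast
qed

lemma geom2_le: "(\<Sum>k\<le>M. (2::real)^k) \<le> 2^(M+1)"
  by (induction M) auto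

lemma pow_sum_bound:
  fixes p :: real and N :: nat and P :: "nat \<Rightarrow> bool"
  assumes p: "p \<ge> 0" and down: "\<And>k j. P k \<Longrightarrow> j \<le> k \<Longrightarrow> P j"
  shows "(\<Sum>k\<le>N. 2^k * (if P k then 1 else 0::real)) powr p
         \<le> (\<Sum>k\<le>N. 2 powr (real (k+1) * p) * (if P k then 1 else 0))"
proof (cases "\<exists>k\<le>N. P k")
  case False
  then have "(\<Sum>k\<le>N. 2^k * (if P k then 1 else 0::real)) = 0" by (intro sum.neutral) auto
  moreover have "0 \<le> (\<Sum>k\<le>N. 2 powr (real (k+1) * p) * (if P k then 1 else 0))"
    by (intro sum_nonneg) auto
  ultimately show ?thesis by simp
next
  case True
  define S where "S = {k. k \<le> N \<and> P k}"
  have fin: "finite S" "S \<noteq> {}" using True by (auto simp: S_def)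
  define M where "M = Max S"
  have MS: "M \<in> S" using fin by (simp add: M_def)
  have SM: "S = {..M}"
  proof
    show "S \<subseteq> {..M}" using fin by (auto simp: M_def)
    show "{..M} \<subseteq> S" using MS down by (auto simp: S_def)
  qed
  have "(\<Sum>k\<le>N. 2^k * (if P k then 1 else 0::real)) = (\<Sum>k\<in>{k\<in>{..N}. P k}. 2^k)"
  proof -
    have "(\<Sum>k\<le>N. 2^k * (if P k then 1 else 0::real)) = (\<Sum>k\<le>N. if P k then 2^k else 0)"
      by (rule sum.cong) auto
    also have "\<dots> = (\<Sum>k\<in>{k\<in>{..N}. P k}. 2^k)" by (rule sum.inter_filter[symmetric]) auto
    finally show ?thesis .
  qed
  also have "{k\<in>{..N}. P k} = {..M}" using SM by (auto simp: S_def)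
  finally have eq: "(\<Sum>k\<le>N. 2^k * (if P k then 1 else 0::real)) = (\<Sum>k\<le>M. 2^k)" .
  have "(\<Sum>k\<le>M. (2::real)^k) powr p \<le> (2^(M+1)) powr p"
    by (intro powr_mono2 p geom2_le) (auto intro: sum_nonneg)
  also have "(2^(M+1)::real) powr p = 2 powr (real (M+1) * p)"
  proof -
    have "(2^(M+1)::real) = 2 powr (real (M+1))" by (rule powr_realpow[symmetric]) simp
    then show ?thesis by (simp only: powr_powr)
  qed
  also have "\<dots> = 2 powr (real (M+1) * p) * (if P M then 1 else 0)" using MS by (simp add: S_def)
  also have "\<dots> \<le> (\<Sum>k\<le>N. 2 powr (real (k+1) * p) * (if P k then 1 else 0))"
    by (rule member_le_sum) (use MS in \<open>auto simp: S_def\<close>)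
  finally show ?thesis using eq by simp
qed

lemma final_contra:
  fixes c2 K p :: real and n :: nat
  assumes c2: "c2 > 0" and K: "K \<ge> 0" and p: "1 \<le> p" "p \<le> real n" and n: "n \<ge> 2"
    and H: "\<forall>N::nat. c2 * (real N + 1) powr p \<le> K * (\<Sum>k\<le>N. 2 powr (real k * (p - real n)))"
  shows False
proof (cases "p < real n")
  case True
  define q where "q = (2::real) powr (p - real n)"
  have q: "0 < q" "q < 1" using True by (auto simp: q_def powr_less_one)
  have sb: "(\<Sum>k\<le>N. 2 powr (real k * (p - real n))) \<le> 1 / (1 - q)" for N
  proof -
    have "(\<Sum>k\<le>N. 2 powr (real k * (p - real n))) = (\<Sum>k<Suc N. q ^ k)"
    proof (intro sum.cong)
      fix k assume "k \<in> {..<Suc N}"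
      have "2 powr (real k * (p - real n)) = (2 powr (p - real n)) powr real k"
        by (simp add: powr_powr mult.commute)
      also have "\<dots> = q ^ k" using q by (simp add: q_def powr_realpow)
      finally show "2 powr (real k * (p - real n)) = q ^ k" .
    qed (simp add: lessThan_Suc_atMost)
    also have "\<dots> = (1 - q ^ Suc N) / (1 - q)" using q by (subst sum_gp_strict) simp
    also have "\<dots> \<le> 1 / (1 - q)" using q by (intro divide_right_mono) auto
    finally show ?thesis .
  qed
  obtain N :: nat where N: "real N > K * (1 / (1 - q)) / c2" using reals_Archimedean2 by blast
  have "c2 * (real N + 1) \<le> c2 * (real N + 1) powr p"
  proof -
    have "(real N + 1) powr 1 \<le> (real N + 1) powr p" by (rule powr_mono) (use p in auto)
    then show ?thesis using c2 by simp
  qed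
  also have "\<dots> \<le> K * (\<Sum>k\<le>N. 2 powr (real k * (p - real n)))" using H by blast
  also have "\<dots> \<le> K * (1 / (1 - q))" using sb K by (intro mult_left_mono) auto
  finally have "c2 * (real N + 1) \<le> K * (1 / (1 - q))" .
  moreover have "K * (1 / (1 - q)) < c2 * real N"
    using N c2 pos_divide_less_eq[OF c2, of "K * (1 / (1 - q))" "real N"] by (simp add: mult.commute)
  moreover have "c2 * real N \<le> c2 * (real N + 1)" using c2 by simp
  ultimately show False by linarith
next
  case False
  then have pn: "p = real n" using p by simp
  have sN: "(\<Sum>k\<le>N. 2 powr (real k * (p - real n))) = real N + 1" for N by (simp add: pn)
  obtain N :: nat where N: "real N > K / c2" using reals_Archimedean2 by blast
  have "c2 * (real N + 1) ^ 2 \<le> c2 * (real N + 1) powr p"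
  proof -
    have "(real N + 1) powr 2 \<le> (real N + 1) powr p" by (rule powr_mono) (use p n pn in auto)
    moreover have "(real N + 1) powr 2 = (real N + 1) ^ 2" by (rule powr_numeral) simp
    ultimately show ?thesis using c2 by simp
  qed
  also have "\<dots> \<le> K * (\<Sum>k\<le>N. 2 powr (real k * (p - real n)))" using H by blast
  also have "\<dots> = K * (real N + 1)" by (simp only: sN)
  finally have "c2 * (real N + 1) * (real N + 1) \<le> K * (real N + 1)" by (simp add: power2_eq_square mult.assoc)
  then have "c2 * (real N + 1) \<le> K" by (simp add: mult_le_cancel_right)
  moreover have "K < c2 * real N"
    using N c2 pos_divide_less_eq[OF c2, of K "real N"] by (simp add: mult.commute)
  moreover have "c2 * real N \<le> c2 * (real N + 1)" using c2 by simp
  ultimately show False by linarith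
qed

theorem proposition12p1:
  fixes \<gamma> :: "real \<Rightarrow> real^'n" and \<chi>' :: "real \<Rightarrow> real"
    and a b c0 p :: real and U :: "real set"
  assumes n2: "CARD('n) \<ge> 2"
    and U: "open U" "{a..b} \<subseteq> U"
    and smooth_gamma: "\<forall>k i. \<forall>x\<in>U. ((deriv ^^ k) (\<lambda>t. \<gamma> t $ i)) differentiable (at x)"
    and c0: "c0 > 0"
    and nondeg: "\<forall>s\<in>{a..b}. \<bar>torsion_det \<gamma> s\<bar> \<ge> c0"
    and smooth_chi: "\<forall>k x. ((deriv ^^ k) \<chi>') differentiable (at x)"
    and chi_nonneg: "\<forall>s. \<chi>' s \<ge> 0"
    and chi_nonzero: "\<exists>s. \<chi>' s \<noteq> 0"
    and chi_supp: "closure {s. \<chi>' s \<noteq> 0} \<subseteq> {a<..<b}"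
    and p: "1 \<le> p" "p \<le> real CARD('n)"
  shows "\<not> (\<exists>C::real. \<forall>f :: real^'n \<Rightarrow> real.
            f \<in> borel_measurable lborel \<and> integrable lborel (\<lambda>x. \<bar>f x\<bar> powr p) \<longrightarrow>
            (\<integral>\<^sup>+ x. enn_powr (curve_maximal \<gamma> \<chi>' f x) p \<partial>lborel)
              \<le> ennreal C * (\<integral>\<^sup>+ x. ennreal (\<bar>f x\<bar> powr p) \<partial>lborel))"
proof
  assume "\<exists>C::real. \<forall>f :: real^'n \<Rightarrow> real.
            f \<in> borel_measurable lborel \<and> integrable lborel (\<lambda>x. \<bar>f x\<bar> powr p) \<longrightarrow>
            (\<integral>\<^sup>+ x. enn_powr (curve_maximal \<gamma> \<chi>' f x) p \<partial>lborel)
              \<le> ennreal C * (\<integral>\<^sup>+ x. ennreal (\<bar>f x\<bar> powr p) \<partial>lborel)"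
  then obtain C :: real where HC: "\<And>f :: real^'n \<Rightarrow> real.
            f \<in> borel_measurable lborel \<Longrightarrow> integrable lborel (\<lambda>x. \<bar>f x\<bar> powr p) \<Longrightarrow>
            (\<integral>\<^sup>+ x. enn_powr (curve_maximal \<gamma> \<chi>' f x) p \<partial>lborel)
              \<le> ennreal C * (\<integral>\<^sup>+ x. ennreal (\<bar>f x\<bar> powr p) \<partial>lborel)" by blast
  let ?n = "CARD('n)"
  define ord where "ord = (col_order :: 'n \<Rightarrow> nat)"
  have ordb: "bij_betw ord UNIV {1..?n}" unfolding ord_def by (rule col_order_bij)
  have "?n \<in> ord ` UNIV" using bij_betw_imp_surj_on[OF ordb] n2 by simp
  then obtain k0 where k0: "ord k0 = ?n" by (metis imageE)
  define G where "G s = (\<chi> i j. curve_deriv (ord j) \<gamma> s $ i)" for s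
  have detG: "det (G s) \<noteq> 0" if "s \<in> {a..b}" for s
  proof -
    have "c0 \<le> \<bar>det (G s)\<bar>" using nondeg that unfolding torsion_det_def G_def ord_def by blast
    then show ?thesis using c0 by auto
  qed
  have chid: "\<chi>' differentiable (at x)" for x using smooth_chi[rule_format, of 0 x] by simp
  have chicont: "continuous_on UNIV \<chi>'"
    by (intro continuous_at_imp_continuous_on ballI differentiable_imp_continuous_within chid)
  obtain s1 where "\<chi>' s1 \<noteq> 0" using chi_nonzero by blast
  then have s1: "\<chi>' s1 > 0" using chi_nonneg by (simp add: order_le_neq_trans)
  have "s1 \<in> closure {s. \<chi>' s \<noteq> 0}" using s1 closure_subset by fastforce
  then have s1ab: "s1 \<in> {a<..<b}" using chi_supp by blast
  define m where "m = \<chi>' s1 / 2"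
  have m: "m > 0" using s1 by (simp add: m_def)
  define J where "J = {a<..<b} \<inter> {s. m < \<chi>' s}"
  have Jopen: "open J" unfolding J_def
    by (intro open_Int open_greaterThanLessThan open_Collect_less continuous_on_const chicont)
  have s1J: "s1 \<in> J" using s1ab s1 m by (simp add: J_def m_def)
  have JU: "J \<subseteq> U" using U by (auto simp: J_def)
  have JE: "J \<noteq> {}" using s1J by blast
  have detJ: "\<forall>s\<in>J. det (\<chi> i j. curve_deriv (ord j) \<gamma> s $ i) \<noteq> 0"
  proof
    fix s assume "s \<in> J"
    then have "s \<in> {a..b}" by (auto simp: J_def)
    then show "det (\<chi> i j. curve_deriv (ord j) \<gamma> s $ i) \<noteq> 0" using detG unfolding G_def by blast
  qed
  obtain s0 where s0J: "s0 \<in> J" and coef: "\<forall>c. G s0 *v c = \<gamma> s0 \<longrightarrow> c $ k0 \<noteq> 0"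
    using key_nondeg[OF ordb k0 Jopen JE JU smooth_gamma detJ] unfolding G_def by blast
  have s0ab: "s0 \<in> {a..b}" using s0J by (auto simp: J_def)
  define G0 where "G0 = G s0"
  obtain Bm where Bm: "Bm ** G0 = mat 1" "G0 ** Bm = mat 1"
    using inv_mat_ex[OF detG[OF s0ab]] unfolding G0_def by blast
  have BG: "Bm *v (G0 *v z) = z" for z by (simp add: matrix_vector_mul_assoc Bm)
  have GB: "G0 *v (Bm *v z) = z" for z by (simp add: matrix_vector_mul_assoc Bm)
  define \<alpha> where "\<alpha> = (Bm *v \<gamma> s0) $ k0"
  have \<alpha>: "\<alpha> \<noteq> 0" using coef GB unfolding \<alpha>_def G0_def by blast
  obtain r where r: "r > 0" "cball s0 r \<subseteq> J" using Jopen s0J open_contains_cball by blast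
  have cU: "cball s0 r \<subseteq> U" using r JU by blast
  have chim: "\<chi>' s > m" if "s \<in> cball s0 r" for s using that r by (auto simp: J_def)
  have cab: "cball s0 r \<subseteq> {a<..<b}" using r by (auto simp: J_def)
  have "\<forall>j. \<exists>K\<ge>0. \<forall>s\<in>cball s0 r. \<bar>\<gamma> s $ j - (\<Sum>m<?n. (deriv ^^ m) (\<lambda>t. \<gamma> t $ j) s0 / fact m * (s - s0)^m)\<bar> \<le> K * \<bar>s - s0\<bar>^?n"
  proof
    fix j
    show "\<exists>K\<ge>0. \<forall>s\<in>cball s0 r. \<bar>\<gamma> s $ j - (\<Sum>m<?n. (deriv ^^ m) (\<lambda>t. \<gamma> t $ j) s0 / fact m * (s - s0)^m)\<bar> \<le> K * \<bar>s - s0\<bar>^?n"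
      by (rule taylor_bound[of U "\<lambda>t. \<gamma> t $ j" s0 r ?n]) (use smooth_gamma cU in auto)
  qed
  then obtain Kt where Kt0: "\<forall>j. Kt j \<ge> 0 \<and> (\<forall>s\<in>cball s0 r. \<bar>\<gamma> s $ j - (\<Sum>m<?n. (deriv ^^ m) (\<lambda>t. \<gamma> t $ j) s0 / fact m * (s - s0)^m)\<bar> \<le> Kt j * \<bar>s - s0\<bar>^?n)"
    by (rule choice[THEN exE]) blast
  have Kt: "\<And>j. Kt j \<ge> 0"
    "\<And>j s. s \<in> cball s0 r \<Longrightarrow> \<bar>\<gamma> s $ j - (\<Sum>m<?n. (deriv ^^ m) (\<lambda>t. \<gamma> t $ j) s0 / fact m * (s - s0)^m)\<bar> \<le> Kt j * \<bar>s - s0\<bar>^?n"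
    using Kt0 by blast+
  define Bc where "Bc = (\<Sum>j\<in>UNIV. \<bar>Bm$k0$j\<bar> * Kt j)"
  have Bc0: "Bc \<ge> 0" unfolding Bc_def using Kt(1) by (intro sum_nonneg) auto
  have taylor: "\<bar>(Bm *v \<gamma> s) $ k0 - \<alpha>\<bar> \<le> Bc * \<bar>s - s0\<bar>^?n" if s: "s \<in> cball s0 r" for s
  proof -
    define P where "P j = (\<Sum>m<?n. (deriv ^^ m) (\<lambda>t. \<gamma> t $ j) s0 / fact m * (s - s0)^m)" for j
    have e: "(Bm *v curve_deriv m \<gamma> s0) $ k0 = (if m = 0 then \<alpha> else 0)" if "m < ?n" for m
    proof (cases "m = 0")
      case True then show ?thesis by (simp add: curve_deriv_0 \<alpha>_def)
    next
      case False
      then have m1: "m \<in> {1..?n}" using that by auto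
      then obtain j where j: "ord j = m" using ordb unfolding bij_betw_def by (metis imageE)
      have "curve_deriv m \<gamma> s0 = G0 *v axis j 1"
        by (simp add: matrix_vector_mult_basis column_def G0_def G_def j vec_eq_iff)
      then have "(Bm *v curve_deriv m \<gamma> s0) = axis j 1" by (simp add: BG)
      moreover have "j \<noteq> k0" using j k0 that by auto
      ultimately show ?thesis using False by (simp add: axis_def)
    qed
    have "(\<Sum>j\<in>UNIV. Bm$k0$j * P j) = (\<Sum>m<?n. (\<Sum>j\<in>UNIV. Bm$k0$j * curve_deriv m \<gamma> s0 $ j) / fact m * (s - s0)^m)"
    proof -
      have "(\<Sum>j\<in>UNIV. Bm$k0$j * P j) = (\<Sum>j\<in>UNIV. \<Sum>m<?n. Bm$k0$j * ((deriv ^^ m) (\<lambda>t. \<gamma> t $ j) s0 / fact m * (s - s0)^m))"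
        unfolding P_def by (simp add: sum_distrib_left)
      also have "\<dots> = (\<Sum>m<?n. \<Sum>j\<in>UNIV. Bm$k0$j * ((deriv ^^ m) (\<lambda>t. \<gamma> t $ j) s0 / fact m * (s - s0)^m))"
        by (rule sum.swap)
      also have "\<dots> = (\<Sum>m<?n. (\<Sum>j\<in>UNIV. Bm$k0$j * curve_deriv m \<gamma> s0 $ j) / fact m * (s - s0)^m)"
      proof (rule sum.cong[OF refl])
        fix m
        have "(\<Sum>j\<in>UNIV. Bm$k0$j * ((deriv ^^ m) (\<lambda>t. \<gamma> t $ j) s0 / fact m * (s - s0)^m))
            = (\<Sum>j\<in>UNIV. (Bm$k0$j * curve_deriv m \<gamma> s0 $ j) * ((s - s0)^m / fact m))"
          by (rule sum.cong[OF refl]) (simp add: curve_deriv_def)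
        also have "\<dots> = (\<Sum>j\<in>UNIV. Bm$k0$j * curve_deriv m \<gamma> s0 $ j) * ((s - s0)^m / fact m)"
          by (rule sum_distrib_right[symmetric])
        finally show "(\<Sum>j\<in>UNIV. Bm$k0$j * ((deriv ^^ m) (\<lambda>t. \<gamma> t $ j) s0 / fact m * (s - s0)^m))
            = (\<Sum>j\<in>UNIV. Bm$k0$j * curve_deriv m \<gamma> s0 $ j) / fact m * (s - s0)^m" by simp
      qed
      finally show ?thesis .
    qed
    also have "\<dots> = (\<Sum>m<?n. (if m = 0 then \<alpha> else 0))"
    proof (rule sum.cong)
      fix m assume "m \<in> {..<?n}"
      then show "(\<Sum>j\<in>UNIV. Bm$k0$j * curve_deriv m \<gamma> s0 $ j) / fact m * (s - s0)^m = (if m = 0 then \<alpha> else 0)"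
        using e[of m] by (simp add: matrix_vector_mult_def)
    qed simp
    also have "\<dots> = \<alpha>" by simp
    finally have PS: "(\<Sum>j\<in>UNIV. Bm$k0$j * P j) = \<alpha>" .
    have "(Bm *v \<gamma> s) $ k0 - \<alpha> = (\<Sum>j\<in>UNIV. Bm$k0$j * (\<gamma> s $ j - P j))"
      using PS by (simp add: matrix_vector_mult_def right_diff_distrib sum_subtractf)
    also have "\<bar>\<dots>\<bar> \<le> (\<Sum>j\<in>UNIV. \<bar>Bm$k0$j\<bar> * (Kt j * \<bar>s - s0\<bar>^?n))"
    proof (rule order_trans[OF sum_abs], rule sum_mono)
      fix j
      have "\<bar>\<gamma> s $ j - P j\<bar> \<le> Kt j * \<bar>s - s0\<bar>^?n" using Kt(2)[OF s, of j] by (simp add: P_def)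
      then show "\<bar>Bm$k0$j * (\<gamma> s $ j - P j)\<bar> \<le> \<bar>Bm$k0$j\<bar> * (Kt j * \<bar>s - s0\<bar>^?n)"
        by (simp add: abs_mult mult_left_mono)
    qed
    also have "\<dots> = Bc * \<bar>s - s0\<bar>^?n" unfolding Bc_def sum_distrib_right by (simp add: mult_ac)
    finally show ?thesis .
  qed
  have gcont: "continuous_on U \<gamma>"
  proof -
    have "continuous_on U (\<lambda>s. \<chi> i. \<gamma> s $ i)"
    proof (intro continuous_on_vec_lambda continuous_at_imp_continuous_on ballI differentiable_imp_continuous_within)
      fix i x assume "x \<in> U"
      then have "((deriv ^^ 0) (\<lambda>t. \<gamma> t $ i)) differentiable (at x)" using smooth_gamma by blast
      then show "(\<lambda>s. \<gamma> s $ i) differentiable at x" by simp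
    qed
    then show ?thesis by simp
  qed
  have "\<forall>i. \<exists>Gi. \<forall>s\<in>cball s0 r. \<bar>(Bm *v \<gamma> s) $ i\<bar> \<le> Gi"
  proof
    fix i
    have c1: "continuous_on (cball s0 r) \<gamma>" by (rule continuous_on_subset[OF gcont cU])
    have "continuous_on (cball s0 r) (\<lambda>s. (Bm *v \<gamma> s) $ i)"
      by (rule continuous_on_compose2[OF mv_comp_cont[of UNIV Bm i] c1]) simp
    then have "compact ((\<lambda>s. (Bm *v \<gamma> s) $ i) ` cball s0 r)" by (rule compact_continuous_image) simp
    then have "bounded ((\<lambda>s. (Bm *v \<gamma> s) $ i) ` cball s0 r)" by (rule compact_imp_bounded)
    then obtain Bd where "\<forall>y\<in>(\<lambda>s. (Bm *v \<gamma> s) $ i) ` cball s0 r. norm y \<le> Bd" unfolding bounded_iff by blast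
    then have "\<forall>s\<in>cball s0 r. \<bar>(Bm *v \<gamma> s) $ i\<bar> \<le> Bd" by simp
    then show "\<exists>Gi. \<forall>s\<in>cball s0 r. \<bar>(Bm *v \<gamma> s) $ i\<bar> \<le> Gi" by blast
  qed
  then obtain Gf where Gf: "\<forall>i. \<forall>s\<in>cball s0 r. \<bar>(Bm *v \<gamma> s) $ i\<bar> \<le> Gf i"
    by (rule choice[THEN exE]) blast
  define \<Gamma> where "\<Gamma> = (\<Sum>i\<in>UNIV. \<bar>Gf i\<bar>)"
  have \<Gamma>0: "\<Gamma> \<ge> 0" by (simp add: \<Gamma>_def sum_nonneg)
  have \<Gamma>: "\<bar>(Bm *v \<gamma> s) $ i\<bar> \<le> \<Gamma>" if "s \<in> cball s0 r" for s i
  proof -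
    have "\<bar>(Bm *v \<gamma> s) $ i\<bar> \<le> Gf i" using Gf that by blast
    then have "\<bar>(Bm *v \<gamma> s) $ i\<bar> \<le> \<bar>Gf i\<bar>" by linarith
    also have "\<dots> \<le> \<Gamma>" unfolding \<Gamma>_def by (rule member_le_sum) auto
    finally show ?thesis .
  qed
  define \<rho>0 where "\<rho>0 = min r (1 / (2 * (Bc + 1)))"
  have \<rho>0: "\<rho>0 > 0" "\<rho>0 \<le> r" using r Bc0 by (auto simp: \<rho>0_def)
  have \<rho>0small: "2 * Bc * \<rho>0 ^ ?n < 1"
  proof -
    have h1: "\<rho>0 \<le> 1 / (2 * (Bc + 1))" by (simp add: \<rho>0_def)
    have "1 / (2 * (Bc + 1)) \<le> 1" using Bc0 by (simp add: field_simps)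
    then have "\<rho>0 \<le> 1" using h1 by linarith
    then have "\<rho>0 ^ ?n \<le> \<rho>0" using \<rho>0(1) n2 by (intro power_decreasing[of 1 ?n \<rho>0, simplified]) auto
    then have "2 * Bc * \<rho>0 ^ ?n \<le> 2 * Bc * \<rho>0" using Bc0 by (simp add: mult_left_mono)
    also have "\<dots> \<le> 2 * Bc * (1 / (2 * (Bc + 1)))" using Bc0 h1 by (intro mult_left_mono) auto
    also have "\<dots> < 1" using Bc0 by (simp add: field_simps)
    finally show ?thesis .
  qed
  define R where "R = 1 + 2 * \<Gamma>"
  define w where "w k = (1/2::real)^(?n*k)" for k
  have wpos: "w k > 0" for k by (simp add: w_def)
  have wmono: "w k \<le> w j" if "j \<le> k" for j k
    unfolding w_def by (rule power_decreasing) (use that in auto)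
  define A where "A k = slab Bm k0 R (- w k) (2 * w k)" for k
  have A_borel[measurable]: "A k \<in> sets borel" for k by (simp add: A_def)
  have A_nested: "y \<in> A j" if "j \<le> k" "y \<in> A k" for j k y
    using that wmono[OF that(1)] by (auto simp: A_def slab_def)
  define f where "f N y = (\<Sum>k\<le>N. 2^k * indicator (A k) y :: real)" for N y
  have f_meas[measurable]: "f N \<in> borel_measurable borel" for N unfolding f_def by measurable
  define z0 :: "real^'n" where "z0 = (\<chi> i. if i = k0 then 3/2 * \<alpha> else 0)"
  define y0 where "y0 = G0 *v z0"
  obtain Kb where Kb: "Kb > 0" "\<And>h. norm (Bm *v h) \<le> norm h * Kb"
    using bounded_linear.pos_bounded[OF matrix_vector_mul_bounded_linear[of Bm]] by blast
  define e where "e = min 1 (\<bar>\<alpha>\<bar>/2) / Kb"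
  have e: "e > 0" using Kb \<alpha> by (simp add: e_def)
  have Egood: "1 < (Bm *v x) $ k0 / \<alpha> \<and> (Bm *v x) $ k0 / \<alpha> < 2 \<and> (\<forall>i. i \<noteq> k0 \<longrightarrow> \<bar>(Bm *v x) $ i\<bar> < 1)"
    if x: "x \<in> ball y0 e" for x
  proof -
    have "norm (Bm *v x - z0) = norm (Bm *v (x - y0))"
      by (simp add: y0_def BG matrix_vector_mult_diff_distrib)
    also have "\<dots> \<le> norm (x - y0) * Kb" by (rule Kb(2))
    also have "\<dots> < e * Kb" using x Kb(1) by (simp add: dist_norm norm_minus_commute)
    also have "\<dots> = min 1 (\<bar>\<alpha>\<bar>/2)" using Kb(1) by (simp add: e_def)
    finally have nb: "norm (Bm *v x - z0) < min 1 (\<bar>\<alpha>\<bar>/2)" .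
    have comp: "\<bar>(Bm *v x) $ i - z0 $ i\<bar> < min 1 (\<bar>\<alpha>\<bar>/2)" for i
      using component_le_norm_cart[of "Bm *v x - z0" i] nb by simp
    have k: "\<bar>(Bm *v x) $ k0 - 3/2 * \<alpha>\<bar> < \<bar>\<alpha>\<bar>/2" using comp[of k0] by (simp add: z0_def)
    have "(Bm *v x) $ k0 / \<alpha> - 3/2 = ((Bm *v x) $ k0 - 3/2 * \<alpha>) / \<alpha>"
      using \<alpha> by (simp add: diff_divide_distrib)
    then have "\<bar>(Bm *v x) $ k0 / \<alpha> - 3/2\<bar> = \<bar>(Bm *v x) $ k0 - 3/2 * \<alpha>\<bar> / \<bar>\<alpha>\<bar>"
      by (simp add: abs_divide)
    also have "\<dots> < 1/2"
      using k \<alpha> pos_divide_less_eq[of "\<bar>\<alpha>\<bar>" "\<bar>(Bm *v x) $ k0 - 3/2 * \<alpha>\<bar>" "1/2"] by simp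
    finally have "\<bar>(Bm *v x) $ k0 / \<alpha> - 3/2\<bar> < 1/2" .
    then have "1 < (Bm *v x) $ k0 / \<alpha> \<and> (Bm *v x) $ k0 / \<alpha> < 2" by linarith
    moreover have "\<bar>(Bm *v x) $ i\<bar> < 1" if "i \<noteq> k0" for i using comp[of i] that by (simp add: z0_def)
    ultimately show ?thesis by auto
  qed
  have Epos: "emeasure lborel (ball y0 e) = ennreal (unit_ball_vol (DIM(real^'n)) * e ^ DIM(real^'n))"
    by (rule emeasure_ball) (use e in simp)
  define \<mu>E where "\<mu>E = unit_ball_vol (DIM(real^'n)) * e ^ DIM(real^'n)"
  have \<mu>E: "\<mu>E > 0"
  proof -
    have "0 < e ^ DIM(real^'n)" using e by simp
    moreover have "0 < unit_ball_vol (DIM(real^'n))" by (rule unit_ball_vol_pos) simp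
    ultimately show ?thesis unfolding \<mu>E_def by simp
  qed
  have EmE: "emeasure lborel (ball y0 e) = ennreal \<mu>E" using Epos by (simp add: \<mu>E_def)
  have chi_zero: "\<chi>' s = 0" if "s \<notin> {a<..<b}" for s
  proof (rule ccontr)
    assume "\<chi>' s \<noteq> 0"
    then have "s \<in> {s. \<chi>' s \<noteq> 0}" by simp
    then have "s \<in> closure {s. \<chi>' s \<noteq> 0}" by (rule closure_subset[THEN subsetD])
    then have "s \<in> {a<..<b}" by (rule chi_supp[THEN subsetD])
    then show False using that by simp
  qed
  have chi_meas[measurable]: "\<chi>' \<in> borel_measurable borel"
    by (rule borel_measurable_continuous_onI[OF chicont])
  have chi_int: "integrable lborel \<chi>'"
  proof -
    have "integrable lborel (\<lambda>s. indicator {a..b} s *\<^sub>R \<chi>' s)"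
      by (rule borel_integrable_compact[OF compact_Icc continuous_on_subset[OF chicont]]) auto
    moreover have "(\<lambda>s. indicator {a..b} s *\<^sub>R \<chi>' s) = \<chi>'"
    proof
      fix s show "indicator {a..b} s *\<^sub>R \<chi>' s = \<chi>' s"
        using chi_zero[of s] by (cases "s \<in> {a..b}") auto
    qed
    ultimately show ?thesis by simp
  qed
  define \<gamma>2 where "\<gamma>2 s = (if s \<in> {a<..<b} then \<gamma> s else 0)" for s
  have \<gamma>2_meas[measurable]: "\<gamma>2 \<in> borel_measurable borel"
    unfolding \<gamma>2_def
  proof (rule borel_measurable_continuous_on_if)
    show "{a<..<b} \<in> sets borel" by simp
    show "continuous_on {a<..<b} \<gamma>" by (rule continuous_on_subset[OF gcont]) (use U in auto)
    show "continuous_on (- {a<..<b}) (\<lambda>_. 0)" by (rule continuous_on_const)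
  qed
  have lower: "ennreal (m * (2 * \<rho>0) * (real N + 1)) \<le> curve_maximal \<gamma> \<chi>' (f N) x"
    if x: "x \<in> ball y0 e" for N x
  proof -
    note xg = Egood[OF x]
    define t where "t = (Bm *v x) $ k0 / \<alpha>"
    have t: "1 < t" "t < 2" using xg by (auto simp: t_def)
    have xk0: "(Bm *v x) $ k0 = t * \<alpha>" using \<alpha> by (simp add: t_def)
    define F where "F s = f N (x - t *\<^sub>R \<gamma> s) * \<chi>' s" for s
    define Lk where "Lk k s = 2^k * m * indicator {s0 - \<rho>0/2^k .. s0 + \<rho>0/2^k} s" for k s
    define L where "L s = (\<Sum>k\<le>N. Lk k s)" for s
    have inA: "x - t *\<^sub>R \<gamma> s \<in> A k" if sk: "\<bar>s - s0\<bar> \<le> \<rho>0/2^k" for s k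
    proof -
      have "\<rho>0/2^k \<le> \<rho>0" using \<rho>0 by (simp add: divide_le_eq_numeral1 field_simps)
      then have sc: "s \<in> cball s0 r" using sk \<rho>0 by (simp add: dist_real_def abs_minus_commute)
      have BV: "Bm *v (x - t *\<^sub>R \<gamma> s) = Bm *v x - t *\<^sub>R (Bm *v \<gamma> s)"
        by (simp add: matrix_vector_mult_diff_distrib matrix_vector_mult_scaleR)
      have other: "\<bar>(Bm *v (x - t *\<^sub>R \<gamma> s)) $ i\<bar> \<le> R" if "i \<noteq> k0" for i
      proof -
        have "\<bar>(Bm *v (x - t *\<^sub>R \<gamma> s)) $ i\<bar> = \<bar>(Bm *v x) $ i - t * (Bm *v \<gamma> s) $ i\<bar>"
          by (simp add: BV)
        also have "\<dots> \<le> \<bar>(Bm *v x) $ i\<bar> + \<bar>t * (Bm *v \<gamma> s) $ i\<bar>" by (rule abs_triangle_ineq4)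
        also have "\<bar>t * (Bm *v \<gamma> s) $ i\<bar> = t * \<bar>(Bm *v \<gamma> s) $ i\<bar>" using t by (simp add: abs_mult)
        finally have "\<bar>(Bm *v (x - t *\<^sub>R \<gamma> s)) $ i\<bar> \<le> \<bar>(Bm *v x) $ i\<bar> + t * \<bar>(Bm *v \<gamma> s) $ i\<bar>" .
        also have "\<dots> \<le> 1 + 2 * \<Gamma>"
        proof -
          have "\<bar>(Bm *v x) $ i\<bar> < 1" using xg that by blast
          moreover have "t * \<bar>(Bm *v \<gamma> s) $ i\<bar> \<le> 2 * \<Gamma>"
            using \<Gamma>[OF sc, of i] t \<Gamma>0 by (intro mult_mono) auto
          ultimately show ?thesis by linarith
        qed
        finally show ?thesis by (simp add: R_def)
      qed
      have "(Bm *v (x - t *\<^sub>R \<gamma> s)) $ k0 = - t * ((Bm *v \<gamma> s) $ k0 - \<alpha>)"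
        by (simp add: BV xk0 algebra_simps)
      then have "\<bar>(Bm *v (x - t *\<^sub>R \<gamma> s)) $ k0\<bar> = t * \<bar>(Bm *v \<gamma> s) $ k0 - \<alpha>\<bar>"
        using t by (simp add: abs_mult)
      also have "\<dots> \<le> 2 * (Bc * \<bar>s - s0\<bar>^?n)"
        using taylor[OF sc] t by (intro mult_mono) auto
      also have "\<dots> \<le> 2 * (Bc * (\<rho>0/2^k)^?n)"
        using sk Bc0 by (intro mult_left_mono power_mono) auto
      also have "(\<rho>0/2^k)^?n = \<rho>0 ^ ?n * w k"
      proof -
        have "(\<rho>0/2^k)^?n = \<rho>0^?n / ((2::real)^k)^?n" by (rule power_divide)
        also have "((2::real)^k)^?n = 2^(k*?n)" by (rule power_mult[symmetric])
        also have "k * ?n = ?n * k" by (rule mult.commute)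
        also have "\<rho>0^?n / (2::real)^(?n*k) = \<rho>0 ^ ?n * w k" unfolding w_def power_one_over by simp
        finally show ?thesis .
      qed
      also have "2 * (Bc * (\<rho>0 ^ ?n * w k)) = (2 * Bc * \<rho>0 ^ ?n) * w k" by simp
      also have "\<dots> < w k" using \<rho>0small wpos[of k] by simp
      finally have "\<bar>(Bm *v (x - t *\<^sub>R \<gamma> s)) $ k0\<bar> < w k" .
      then show ?thesis using other unfolding A_def slab_def by auto
    qed
    have cb: "s \<in> cball s0 r" if "\<bar>s - s0\<bar> \<le> \<rho>0/2^k" for s k
    proof -
      have "\<rho>0/2^k \<le> \<rho>0" using \<rho>0 by (simp add: divide_le_eq_numeral1 field_simps)
      then show ?thesis using that \<rho>0 by (simp add: dist_real_def abs_minus_commute)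
    qed
    have LF: "L s \<le> F s" for s
    proof -
      have "L s \<le> (\<Sum>k\<le>N. 2^k * indicator (A k) (x - t *\<^sub>R \<gamma> s) * \<chi>' s)"
        unfolding L_def Lk_def
      proof (rule sum_mono)
        fix k
        show "2^k * m * indicator {s0 - \<rho>0/2^k .. s0 + \<rho>0/2^k} s \<le> 2^k * indicator (A k) (x - t *\<^sub>R \<gamma> s) * \<chi>' s"
        proof (cases "s \<in> {s0 - \<rho>0/2^k .. s0 + \<rho>0/2^k}")
          case True
          then have sk: "\<bar>s - s0\<bar> \<le> \<rho>0/2^k" by auto
          have "m \<le> \<chi>' s" using chim[OF cb[OF sk]] by simp
          then show ?thesis using True inA[OF sk] by simp
        next
          case False
          then show ?thesis using chi_nonneg by simp
        qed
      qed
      also have "\<dots> = F s" by (simp only: F_def f_def sum_distrib_right)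
      finally show ?thesis .
    qed
    define cN where "cN = (\<Sum>k\<le>N. (2::real)^k)"
    have fbound: "0 \<le> f N y \<and> f N y \<le> cN" for y
    proof
      show "0 \<le> f N y" unfolding f_def by (intro sum_nonneg) auto
      show "f N y \<le> cN" unfolding f_def cN_def by (intro sum_mono) (simp add: indicator_def)
    qed
    have Feq: "F = (\<lambda>s. f N (x - t *\<^sub>R \<gamma>2 s) * \<chi>' s)"
    proof
      fix s show "F s = f N (x - t *\<^sub>R \<gamma>2 s) * \<chi>' s"
        using chi_zero[of s] by (cases "s \<in> {a<..<b}") (simp_all add: F_def \<gamma>2_def)
    qed
    have Fmeas: "F \<in> borel_measurable lborel" unfolding Feq by measurable
    have intF: "integrable lborel F"
    proof (rule Bochner_Integration.integrable_bound[OF integrable_mult_right[OF chi_int, of cN] Fmeas])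
      show "AE s in lborel. norm (F s) \<le> norm (cN * \<chi>' s)"
      proof (rule AE_I2)
        fix s
        have "0 \<le> f N (x - t *\<^sub>R \<gamma> s)" "f N (x - t *\<^sub>R \<gamma> s) \<le> cN" using fbound by blast+
        moreover have "0 \<le> \<chi>' s" using chi_nonneg by blast
        ultimately show "norm (F s) \<le> norm (cN * \<chi>' s)"
          by (simp add: F_def abs_mult mult_right_mono)
      qed
    qed
    have intI: "integrable lborel (Lk k)" for k
      unfolding Lk_def by (intro integrable_mult_right integrable_real_indicator) (use \<rho>0 in auto)
    have intL: "integrable lborel L" unfolding L_def by (rule Bochner_Integration.integrable_sum) (rule intI)
    have LintL: "integral\<^sup>L lborel L = m * (2 * \<rho>0) * (real N + 1)"
    proof -
      have "integral\<^sup>L lborel L = (\<Sum>k\<le>N. integral\<^sup>L lborel (Lk k))"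
        unfolding L_def by (rule Bochner_Integration.integral_sum) (rule intI)
      also have "\<dots> = (\<Sum>k\<le>N. m * (2 * \<rho>0))"
      proof (rule sum.cong[OF refl])
        fix k
        have le: "s0 - \<rho>0/2^k \<le> s0 + \<rho>0/2^k" using \<rho>0 by simp
        have "Lk k = (\<lambda>s. 2^k * m * indicator {s0 - \<rho>0/2^k .. s0 + \<rho>0/2^k} s)"
          by (rule ext) (simp add: Lk_def)
        then have "integral\<^sup>L lborel (Lk k) = 2^k * m * measure lborel {s0 - \<rho>0/2^k .. s0 + \<rho>0/2^k}"
          by simp
        also have "\<dots> = 2^k * m * (2 * \<rho>0 / 2^k)" using measure_lborel_Icc[OF le] by simp
        also have "\<dots> = m * (2 * \<rho>0)" by simp
        finally show "integral\<^sup>L lborel (Lk k) = m * (2 * \<rho>0)" .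
      qed
      also have "\<dots> = m * (2 * \<rho>0) * (real N + 1)" by simp
      finally show ?thesis .
    qed
    have "m * (2 * \<rho>0) * (real N + 1) \<le> \<bar>integral\<^sup>L lborel F\<bar>"
      using integral_mono[OF intL intF LF] LintL by simp
    then have "ennreal (m * (2 * \<rho>0) * (real N + 1)) \<le> ennreal \<bar>integral\<^sup>L lborel F\<bar>"
      by (rule ennreal_leI)
    also have "\<dots> \<le> curve_maximal \<gamma> \<chi>' (f N) x"
      unfolding curve_maximal_def F_def using t by (intro SUP_upper) auto
    finally show ?thesis .
  qed
  define v where "v = G0 *v axis k0 1"
  have v: "Bm *v v = axis k0 1" by (simp add: v_def BG)
  have sl_fin: "emeasure lborel (slab Bm k0 R c w') < \<infinity>" for c w'
    by (rule emeasure_bounded_finite[OF slab_bounded[OF Bm(2)]])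
  define Mbr where "Mbr = enn2real (emeasure lborel (slab Bm k0 R 0 1))"
  have Mbr: "emeasure lborel (slab Bm k0 R 0 1) = ennreal Mbr" "Mbr \<ge> 0"
    using sl_fin[of 0 1] by (auto simp: Mbr_def ennreal_enn2real_if)
  have w_eq: "w k = 1 / real (2^(?n*k) :: nat)" for k by (simp add: w_def power_one_over)
  have sl0: "emeasure lborel (slab Bm k0 R 0 (w k)) \<le> ennreal (Mbr * w k)" for k
  proof -
    define M :: nat where "M = 2^(?n*k)"
    have M: "M > 0" by (simp add: M_def)
    define u where "u = enn2real (emeasure lborel (slab Bm k0 R 0 (w k)))"
    have u: "emeasure lborel (slab Bm k0 R 0 (w k)) = ennreal u" "u \<ge> 0"
      using sl_fin[of 0 "w k"] by (auto simp: u_def ennreal_enn2real_if)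
    have "of_nat M * emeasure lborel (slab Bm k0 R 0 (1/M)) \<le> emeasure lborel (slab Bm k0 R 0 1)"
      by (rule slab_pack[OF v M])
    then have "ennreal (real M * u) \<le> ennreal Mbr"
      using u Mbr by (simp add: w_eq M_def ennreal_mult' ennreal_of_nat_eq_real_of_nat)
    then have "real M * u \<le> Mbr" using Mbr(2) by (simp add: ennreal_le_iff)
    then have "u \<le> Mbr * w k" using M by (simp add: w_eq M_def field_simps)
    then show ?thesis using u by (simp add: ennreal_leI)
  qed
  have Ameas: "emeasure lborel (A k) \<le> ennreal (2 * Mbr * w k)" for k
  proof -
    have "A k \<subseteq> slab Bm k0 R (- w k) (w k) \<union> slab Bm k0 R 0 (w k)"
      by (auto simp: A_def slab_def)
    then have "emeasure lborel (A k) \<le> emeasure lborel (slab Bm k0 R (- w k) (w k) \<union> slab Bm k0 R 0 (w k))"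
      by (intro emeasure_mono) auto
    also have "\<dots> \<le> emeasure lborel (slab Bm k0 R (- w k) (w k)) + emeasure lborel (slab Bm k0 R 0 (w k))"
      by (intro emeasure_subadditive) auto
    also have "\<dots> = 2 * emeasure lborel (slab Bm k0 R 0 (w k))"
      using slab_translate[OF v, of R "- w k" "w k"] by (simp add: mult_2)
    also have "\<dots> \<le> 2 * ennreal (Mbr * w k)" using sl0[of k] by (intro mult_left_mono) auto
    also have "\<dots> = ennreal (2 * Mbr * w k)" by (simp add: ennreal_mult' mult.assoc)
    finally show ?thesis .
  qed
  define ck where "ck k = (2::real) powr (real (k+1) * p)" for k
  have fpow: "\<bar>f N y\<bar> powr p \<le> (\<Sum>k\<le>N. ck k * indicator (A k) y)" for N y
  proof -
    have "f N y = (\<Sum>k\<le>N. 2^k * (if y \<in> A k then 1 else 0))" unfolding f_def by (rule sum.cong) (auto simp: indicator_def)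
    moreover have "0 \<le> f N y" unfolding f_def by (intro sum_nonneg) auto
    moreover have "(\<Sum>k\<le>N. 2^k * (if y \<in> A k then 1 else 0::real)) powr p
         \<le> (\<Sum>k\<le>N. 2 powr (real (k+1) * p) * (if y \<in> A k then 1 else 0))"
      by (rule pow_sum_bound) (use p A_nested in auto)
    moreover have "(\<Sum>k\<le>N. ck k * indicator (A k) y) = (\<Sum>k\<le>N. 2 powr (real (k+1) * p) * (if y \<in> A k then 1 else 0))"
      by (rule sum.cong) (auto simp: ck_def indicator_def)
    ultimately show ?thesis by simp
  qed
  have intA: "integrable lborel (\<lambda>y. \<Sum>k\<le>N. ck k * indicator (A k) y)" for N
    by (rule Bochner_Integration.integrable_sum, rule integrable_mult_right, rule integrable_real_indicator)
       (auto intro: le_less_trans[OF Ameas])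
  have upper: "(\<integral>\<^sup>+ y. ennreal (\<bar>f N y\<bar> powr p) \<partial>lborel)
      \<le> ennreal (2 * Mbr * 2 powr p * (\<Sum>k\<le>N. 2 powr (real k * (p - real ?n))))" for N
  proof -
    have "(\<integral>\<^sup>+ y. ennreal (\<bar>f N y\<bar> powr p) \<partial>lborel) \<le> (\<integral>\<^sup>+ y. (\<Sum>k\<le>N. ennreal (ck k) * indicator (A k) y) \<partial>lborel)"
    proof (rule nn_integral_mono)
      fix y
      have "ennreal (\<bar>f N y\<bar> powr p) \<le> ennreal (\<Sum>k\<le>N. ck k * indicator (A k) y)"
        by (rule ennreal_leI[OF fpow])
      also have "\<dots> = (\<Sum>k\<le>N. ennreal (ck k * indicator (A k) y))"
        by (rule sum_ennreal[symmetric]) (auto simp: ck_def)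
      also have "\<dots> = (\<Sum>k\<le>N. ennreal (ck k) * indicator (A k) y)"
        by (rule sum.cong) (auto simp: indicator_def)
      finally show "ennreal (\<bar>f N y\<bar> powr p) \<le> (\<Sum>k\<le>N. ennreal (ck k) * indicator (A k) y)" .
    qed
    also have "\<dots> = (\<Sum>k\<le>N. ennreal (ck k) * emeasure lborel (A k))"
      by (subst nn_integral_sum) (auto simp: nn_integral_cmult_indicator)
    also have "\<dots> \<le> (\<Sum>k\<le>N. ennreal (ck k) * ennreal (2 * Mbr * w k))"
      by (intro sum_mono mult_left_mono Ameas) auto
    also have "\<dots> = ennreal (\<Sum>k\<le>N. ck k * (2 * Mbr * w k))"
    proof -
      have nn: "0 \<le> ck k * (2 * Mbr * w k)" for k
        using Mbr(2) wpos[of k] by (simp add: ck_def)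
      have "(\<Sum>k\<le>N. ennreal (ck k) * ennreal (2 * Mbr * w k)) = (\<Sum>k\<le>N. ennreal (ck k * (2 * Mbr * w k)))"
        by (rule sum.cong) (simp_all add: ennreal_mult' ck_def)
      also have "\<dots> = ennreal (\<Sum>k\<le>N. ck k * (2 * Mbr * w k))" by (rule sum_ennreal) (rule nn)
      finally show ?thesis .
    qed
    also have "(\<Sum>k\<le>N. ck k * (2 * Mbr * w k)) = 2 * Mbr * 2 powr p * (\<Sum>k\<le>N. 2 powr (real k * (p - real ?n)))"
    proof -
      have "ck k * w k = 2 powr p * 2 powr (real k * (p - real ?n))" for k
      proof -
        have "(2::real) powr real (?n*k) = 2^(?n*k)" by (rule powr_realpow) simp
        then have "w k = 1 / 2 powr real (?n*k)" by (simp add: w_def power_one_over)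
        also have "\<dots> = 2 powr (- real (?n*k))" by (simp add: powr_minus_divide)
        finally have wk: "w k = 2 powr (- real (?n*k))" .
        have ex: "real (k+1) * p + - real (?n*k) = p + real k * (p - real ?n)" by (simp add: algebra_simps)
        have "ck k * w k = 2 powr (real (k+1) * p + - real (?n*k))"
          unfolding ck_def wk by (rule powr_add[symmetric])
        also have "\<dots> = 2 powr (p + real k * (p - real ?n))" by (simp only: ex)
        also have "\<dots> = 2 powr p * 2 powr (real k * (p - real ?n))" by (rule powr_add)
        finally show ?thesis .
      qed
      then have eqk: "ck k * (2 * Mbr * w k) = 2 * Mbr * 2 powr p * 2 powr (real k * (p - real ?n))" for k
        by (metis mult.commute mult.left_commute)
      have "(\<Sum>k\<le>N. ck k * (2 * Mbr * w k)) = (\<Sum>k\<le>N. 2 * Mbr * 2 powr p * 2 powr (real k * (p - real ?n)))"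
        by (rule sum.cong[OF refl eqk])
      also have "\<dots> = 2 * Mbr * 2 powr p * (\<Sum>k\<le>N. 2 powr (real k * (p - real ?n)))"
        by (rule sum_distrib_left[symmetric])
      finally show ?thesis .
    qed
    finally show ?thesis .
  qed
  define c2 where "c2 = (m * (2 * \<rho>0)) powr p * \<mu>E"
  define K where "K = max 0 C * (2 * Mbr * 2 powr p)"
  have c2: "c2 > 0" using m \<rho>0 \<mu>E by (simp add: c2_def)
  have K: "K \<ge> 0" using Mbr(2) by (simp add: K_def)
  have final: "\<forall>N::nat. c2 * (real N + 1) powr p \<le> K * (\<Sum>k\<le>N. 2 powr (real k * (p - real ?n)))"
  proof
    fix N :: nat
    define V where "V = m * (2 * \<rho>0) * (real N + 1)"
    define S where "S = (\<Sum>k\<le>N. 2 powr (real k * (p - real ?n)))"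
    have V0: "V \<ge> 0" using m \<rho>0 by (simp add: V_def)
    have S0: "S \<ge> 0" unfolding S_def by (intro sum_nonneg) auto
    have fmeas: "f N \<in> borel_measurable lborel" using f_meas[of N] by simp
    have fint: "integrable lborel (\<lambda>x. \<bar>f N x\<bar> powr p)"
    proof (rule Bochner_Integration.integrable_bound[OF intA[of N]])
      show "(\<lambda>x. \<bar>f N x\<bar> powr p) \<in> borel_measurable lborel" using fmeas by measurable
      show "AE x in lborel. norm (\<bar>f N x\<bar> powr p) \<le> norm (\<Sum>k\<le>N. ck k * indicator (A k) x)"
      proof (rule AE_I2)
        fix x
        have "0 \<le> \<bar>f N x\<bar> powr p" by simp
        moreover have "\<bar>f N x\<bar> powr p \<le> (\<Sum>k\<le>N. ck k * indicator (A k) x)" by (rule fpow)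
        ultimately show "norm (\<bar>f N x\<bar> powr p) \<le> norm (\<Sum>k\<le>N. ck k * indicator (A k) x)" by simp
      qed
    qed
    have pw: "ennreal (V powr p) * indicator (ball y0 e) x \<le> enn_powr (curve_maximal \<gamma> \<chi>' (f N) x) p" for x
    proof (cases "x \<in> ball y0 e")
      case False then show ?thesis by simp
    next
      case True
      have lo: "ennreal V \<le> curve_maximal \<gamma> \<chi>' (f N) x" using lower[OF True, of N] by (simp add: V_def)
      show ?thesis
      proof (cases "curve_maximal \<gamma> \<chi>' (f N) x = \<infinity>")
        case True then show ?thesis by (simp add: enn_powr_def)
      next
        case inf: False
        define M where "M = enn2real (curve_maximal \<gamma> \<chi>' (f N) x)"
        have ME: "curve_maximal \<gamma> \<chi>' (f N) x = ennreal M" using inf by (simp add: M_def ennreal_enn2real_if)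
        have M0: "M \<ge> 0" by (simp add: M_def)
        have "V \<le> M" using lo ME M0 by (simp add: ennreal_le_iff)
        then have "V powr p \<le> M powr p" using V0 p by (intro powr_mono2) auto
        then have "ennreal (V powr p) \<le> ennreal (M powr p)" by (rule ennreal_leI)
        then show ?thesis using True inf by (simp add: enn_powr_def M_def)
      qed
    qed
    have "ennreal (V powr p) * ennreal \<mu>E = (\<integral>\<^sup>+ x. ennreal (V powr p) * indicator (ball y0 e) x \<partial>lborel)"
      using EmE by (simp add: nn_integral_cmult_indicator)
    also have "\<dots> \<le> (\<integral>\<^sup>+ x. enn_powr (curve_maximal \<gamma> \<chi>' (f N) x) p \<partial>lborel)"
      by (rule nn_integral_mono) (rule pw)
    also have "\<dots> \<le> ennreal C * (\<integral>\<^sup>+ x. ennreal (\<bar>f N x\<bar> powr p) \<partial>lborel)"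
      by (rule HC[OF fmeas fint])
    also have "\<dots> \<le> ennreal C * ennreal (2 * Mbr * 2 powr p * S)"
      unfolding S_def by (intro mult_left_mono upper) auto
    also have "ennreal C = ennreal (max 0 C)" by (simp add: ennreal_max_0)
    finally have "ennreal (V powr p) * ennreal \<mu>E \<le> ennreal (max 0 C) * ennreal (2 * Mbr * 2 powr p * S)" .
    then have "ennreal (V powr p * \<mu>E) \<le> ennreal (max 0 C * (2 * Mbr * 2 powr p * S))"
      using \<mu>E Mbr(2) S0 by (simp add: ennreal_mult'')
    then have "V powr p * \<mu>E \<le> max 0 C * (2 * Mbr * 2 powr p * S)"
      using \<mu>E Mbr(2) S0 by (subst (asm) ennreal_le_iff) auto
    moreover have "V powr p = (m * (2 * \<rho>0)) powr p * (real N + 1) powr p"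
      unfolding V_def using m \<rho>0 by (intro powr_mult)
    ultimately show "c2 * (real N + 1) powr p \<le> K * (\<Sum>k\<le>N. 2 powr (real k * (p - real ?n)))"
      by (simp add: c2_def K_def S_def mult_ac)
  qed
  show False by (rule final_contra[OF c2 K p n2 final])
qed

end
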